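(* For $\mathbf F=(F_1,\dots,F_n)\in\mathcal M^n$ and $\Lambda\in\mathcal Q_n$, $\mathcal D_n(\Lambda\mathbf F)\subset\mathcal D_n(F,\dots,F)$, where $F=\frac1n\sum_{i=1}^n F_i$.
   Context: Work on an atomless probability space. $\mathcal M$ is the set of cdfs on $\mathbb{R}$. For $\mathbf G=(G_1,\dots,G_n)\in\mathcal M^n$, $\mathcal D_n(\mathbf G)=\{\text{cdf of } X_1+\dots+X_n: X_i\sim G_i,\ i=1,\dots,n\}$. $\mathcal Q_n$ is the set of $n\times n$ doubly stochastic matrices. For $\Lambda=(\Lambda_{ij})\in\mathcal Q_n$, $\Lambda\mathbf F$ is the tuple whose $i$-th component is the cdf $\sum_{j}\Lambda_{ij}F_j$. *)

theory Defs
  imports "HOL-Probability.Probability"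
begin

definition is_cdf :: "(real \<Rightarrow> real) \<Rightarrow> bool" where
  "is_cdf F \<longleftrightarrow> mono F \<and> (\<forall>x. continuous (at_right x) F)
     \<and> (F \<longlongrightarrow> 0) at_bot \<and> (F \<longlongrightarrow> 1) at_top"

definition atomless :: "'a measure \<Rightarrow> bool" where
  "atomless M \<longleftrightarrow> (\<forall>A\<in>sets M. measure M A > 0 \<longrightarrow>
     (\<exists>B\<in>sets M. B \<subseteq> A \<and> 0 < measure M B \<and> measure M B < measure M A))"

definition Dn :: "'a measure \<Rightarrow> nat \<Rightarrow> (nat \<Rightarrow> real \<Rightarrow> real) \<Rightarrow> (real \<Rightarrow> real) set" where
  "Dn M n G = {H. \<exists>X :: nat \<Rightarrow> 'a \<Rightarrow> real.
      (\<forall>i<n. X i \<in> borel_measurable M \<and> cdf (distr M borel (X i)) = G i) \<and>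
      H = cdf (distr M borel (\<lambda>\<omega>. \<Sum>i<n. X i \<omega>))}"

definition doubly_stochastic :: "nat \<Rightarrow> (nat \<Rightarrow> nat \<Rightarrow> real) \<Rightarrow> bool" where
  "doubly_stochastic n L \<longleftrightarrow> (\<forall>i<n. \<forall>j<n. L i j \<ge> 0)
     \<and> (\<forall>i<n. (\<Sum>j<n. L i j) = 1) \<and> (\<forall>j<n. (\<Sum>i<n. L i j) = 1)"

definition mat_mix :: "nat \<Rightarrow> (nat \<Rightarrow> nat \<Rightarrow> real) \<Rightarrow> (nat \<Rightarrow> real \<Rightarrow> real) \<Rightarrow> nat \<Rightarrow> real \<Rightarrow> real" where
  "mat_mix n L F = (\<lambda>i x. \<Sum>j<n. L i j * F j x)"

end

theory Submission
  imports Defs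
begin


definition mid :: "'a measure \<Rightarrow> 'a set \<Rightarrow> 'a set \<Rightarrow> 'a set" where
  "mid M X Y = X \<union> (SOME C. C \<in> sets M \<and> C \<subseteq> Y - X \<and> measure M C = (measure M Y - measure M X) / 2)"

fun lev :: "'a measure \<Rightarrow> 'a set \<Rightarrow> nat \<Rightarrow> nat \<Rightarrow> 'a set" where
  "lev M A 0 j = (if j = 0 then {} else A)"
| "lev M A (Suc m) j = (if even j then lev M A m (j div 2)
     else mid M (lev M A m (j div 2)) (lev M A m (j div 2 + 1)))"

context prob_space begin

lemma atomless_half:
  assumes "atomless M" "D \<in> events" "prob D > 0"
  shows "\<exists>D'\<in>events. D' \<subseteq> D \<and> 0 < prob D' \<and> prob D' \<le> prob D / 2"
proof -
  obtain E where E: "E\<in>events" "E \<subseteq> D" "0 < prob E" "prob E < prob D"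
    using assms unfolding atomless_def by blast
  have d: "prob (D - E) = prob D - prob E" using E assms(2) by (simp add: finite_measure_Diff)
  show ?thesis
  proof (cases "prob E \<le> prob D / 2")
    case True then show ?thesis using E by blast
  next
    case False then show ?thesis using E d assms(2)
      by (intro bexI[of _ "D - E"]) auto
  qed
qed

lemma atomless_small:
  assumes "atomless M" "B \<in> events" "prob B > 0" "e > 0"
  shows "\<exists>C\<in>events. C \<subseteq> B \<and> 0 < prob C \<and> prob C < e"
proof -
  have "\<exists>C\<in>events. C \<subseteq> B \<and> 0 < prob C \<and> prob C \<le> prob B / 2^k" for k
  proof (induction k)
    case 0 then show ?case using assms by auto
  next
    case (Suc k)
    then obtain C where C: "C\<in>events" "C \<subseteq> B" "0 < prob C" "prob C \<le> prob B / 2^k" by blast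
    obtain D where "D\<in>events" "D \<subseteq> C" "0 < prob D" "prob D \<le> prob C / 2"
      using atomless_half[OF assms(1) C(1,3)] by blast
    moreover have "prob C / 2 \<le> prob B / 2^Suc k" using C(4) by (simp add: field_simps)
    ultimately show ?case using C by (intro bexI[of _ D]) auto
  qed
  moreover obtain k where k: "(1/2::real)^k < e" using real_arch_pow_inv[of e "1/2"] assms by auto
  moreover have "prob B / 2^k \<le> (1/2)^k" by (simp add: power_one_over divide_right_mono)
  ultimately show ?thesis by (meson le_less_trans order.trans)
qed

lemma sierpinski:
  assumes al: "atomless M" and A: "A \<in> events" and t: "0 \<le> t" "t \<le> prob A"
  shows "\<exists>B\<in>events. B \<subseteq> A \<and> prob B = t"
proof -
  define X where "X B = {prob C | C. C \<in> events \<and> C \<subseteq> A - B \<and> prob B + prob C \<le> t}" for B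
  define S where "S B = Sup (X B)" for B
  define P where "P B C \<longleftrightarrow> C \<in> events \<and> C \<subseteq> A - B \<and> prob B + prob C \<le> t \<and> S B / 2 \<le> prob C" for B C
  define nxt where "nxt B = B \<union> (SOME C. P B C)" for B
  define Bs where "Bs k = (nxt ^^ k) {}" for k
  have bdd: "bdd_above (X B)" for B unfolding X_def by (auto intro!: bdd_aboveI[of _ 1])
  have ex: "\<exists>C. P B C" if "B \<in> events" "prob B \<le> t" for B
  proof (cases "S B \<le> 0")
    case True then show ?thesis using that unfolding P_def by (intro exI[of _ "{}"]) auto
  next
    case False
    have "0 \<in> X B" using that unfolding X_def by (auto intro!: exI[of _ "{}"])
    then have "X B \<noteq> {}" by auto
    moreover have "S B / 2 < Sup (X B)" using False unfolding S_def by auto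
    ultimately obtain x where "x \<in> X B" "S B / 2 < x" using less_cSup_iff[OF _ bdd] by blast
    then show ?thesis unfolding X_def P_def by auto
  qed
  have inv: "Bs k \<in> events \<and> Bs k \<subseteq> A \<and> prob (Bs k) \<le> t \<and>
     P (Bs k) (SOME C. P (Bs k) C) \<and> Bs (Suc k) = Bs k \<union> (SOME C. P (Bs k) C) \<and>
     prob (Bs (Suc k)) = prob (Bs k) + prob (SOME C. P (Bs k) C)" for k
  proof (induction k)
    case 0
    have "P {} (SOME C. P {} C)" using ex[of "{}"] t by (auto intro: someI_ex)
    moreover have "Bs (Suc 0) = {} \<union> (SOME C. P {} C)" by (simp add: Bs_def nxt_def)
    ultimately show ?case using t by (simp add: Bs_def P_def)
  next
    case (Suc k)
    let ?C = "SOME C. P (Bs k) C"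
    have e: "Bs (Suc k) \<in> events" "Bs (Suc k) \<subseteq> A" "prob (Bs (Suc k)) \<le> t"
      using Suc unfolding P_def by auto
    have "P (Bs (Suc k)) (SOME C. P (Bs (Suc k)) C)" using ex[of "Bs (Suc k)"] e by (auto intro: someI_ex)
    moreover have "Bs (Suc (Suc k)) = Bs (Suc k) \<union> (SOME C. P (Bs (Suc k)) C)"
      by (simp add: Bs_def nxt_def)
    moreover have "prob (Bs (Suc k) \<union> (SOME C. P (Bs (Suc k)) C)) = prob (Bs (Suc k)) + prob (SOME C. P (Bs (Suc k)) C)"
      using calculation(1) e by (intro finite_measure_Union) (auto simp: P_def)
    ultimately show ?case using e by simp
  qed
  define B where "B = (\<Union>k. Bs k)"
  have inc: "incseq Bs" using inv by (intro incseq_SucI) auto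
  have lim: "(\<lambda>k. prob (Bs k)) \<longlonglongrightarrow> prob B"
    unfolding B_def using inv inc by (intro finite_Lim_measure_incseq) auto
  have Bt: "prob B \<le> t" using lim inv by (intro LIMSEQ_le_const2) auto
  have Be: "B \<in> events" "B \<subseteq> A" using inv unfolding B_def by auto
  show ?thesis
  proof (rule ccontr)
    assume "\<not> ?thesis"
    then have lt: "prob B < t" using Bt Be by auto
    have "prob (A - B) = prob A - prob B" using Be A by (simp add: finite_measure_Diff)
    then have "prob (A - B) > 0" using lt t by auto
    then obtain C where C: "C \<in> events" "C \<subseteq> A - B" "0 < prob C" "prob C < t - prob B"
      using atomless_small[OF al _ _, of "A - B" "t - prob B"] A Be lt by auto
    have grow: "prob (Bs k) + prob C / 2 \<le> prob (Bs (Suc k))" for k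
    proof -
      have sub: "Bs k \<subseteq> B" unfolding B_def by auto
      then have "prob (Bs k) \<le> prob B" using inv Be by (intro finite_measure_mono) auto
      moreover have "C \<subseteq> A - Bs k" using C(2) sub by blast
      ultimately have "prob C \<in> X (Bs k)" unfolding X_def using C by (intro CollectI exI[of _ C]) auto
      then have "prob C \<le> S (Bs k)" unfolding S_def using bdd by (intro cSup_upper) auto
      then show ?thesis using inv[of k] unfolding P_def by auto
    qed
    have lin: "real k * (prob C / 2) \<le> prob (Bs k)" for k
    proof (induction k)
      case 0 then show ?case by (simp add: Bs_def)
    next
      case (Suc k) then show ?case using grow[of k] by (simp add: distrib_right)
    qed
    obtain k where k: "2 / prob C < real k" using reals_Archimedean2 by blast
    then have "2 < real k * prob C" using C(3) by (simp add: field_simps)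
    moreover have "prob (Bs k) \<le> 1" by simp
    ultimately show False using lin[of k] by simp
  qed
qed

lemma mid_props:
  assumes al: "atomless M" and "X \<in> events" "Y \<in> events" "X \<subseteq> Y"
  shows "mid M X Y \<in> events" "X \<subseteq> mid M X Y" "mid M X Y \<subseteq> Y"
    "prob (mid M X Y) = (prob X + prob Y) / 2"
proof -
  let ?Q = "\<lambda>C. C \<in> sets M \<and> C \<subseteq> Y - X \<and> measure M C = (measure M Y - measure M X) / 2"
  have d: "prob (Y - X) = prob Y - prob X" using assms by (simp add: finite_measure_Diff)
  have "prob X \<le> prob Y" using assms by (intro finite_measure_mono) auto
  then obtain C where "C \<in> events" "C \<subseteq> Y - X" "prob C = (prob Y - prob X) / 2"
    using sierpinski[OF al, of "Y - X" "(prob Y - prob X) / 2"] assms d by auto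
  then have "?Q C" by auto
  then have Q: "?Q (SOME C. ?Q C)" by (rule someI)
  show "mid M X Y \<in> events" "X \<subseteq> mid M X Y" "mid M X Y \<subseteq> Y"
    using Q assms unfolding mid_def by auto
  have "prob (mid M X Y) = prob X + prob (SOME C. ?Q C)"
    unfolding mid_def using Q assms by (intro finite_measure_Union) auto
  then show "prob (mid M X Y) = (prob X + prob Y) / 2" using Q by simp
qed

lemma mid_same: "mid M X X = X"
proof -
  let ?Q = "\<lambda>C. C \<in> sets M \<and> C \<subseteq> X - X \<and> measure M C = (measure M X - measure M X) / 2"
  have "?Q {}" by simp
  then have "?Q (SOME C. ?Q C)" by (rule someI)
  then show ?thesis unfolding mid_def by auto
qed

lemma lev_props:
  assumes al: "atomless M" and A: "A \<in> events"
  shows "(\<forall>j. lev M A m j \<in> events \<and> lev M A m j \<subseteq> A \<and>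
           prob (lev M A m j) = real (min j (2^m)) / 2^m * prob A \<and> (j \<ge> 2^m \<longrightarrow> lev M A m j = A))
         \<and> (\<forall>j j'. j \<le> j' \<longrightarrow> lev M A m j \<subseteq> lev M A m j')"
proof (induction m)
  case 0
  have "lev M A 0 j \<subseteq> lev M A 0 (Suc j)" for j by auto
  then have "j \<le> j' \<Longrightarrow> lev M A 0 j \<subseteq> lev M A 0 j'" for j j'
    by (rule lift_Suc_mono_le[of "lev M A 0"])
  then show ?case using A by auto
next
  case (Suc m)
  let ?L = "lev M A m"
  have IH1: "\<And>j. ?L j \<in> events" "\<And>j. ?L j \<subseteq> A"
    "\<And>j. prob (?L j) = real (min j (2^m)) / 2^m * prob A" "\<And>j. j \<ge> 2^m \<Longrightarrow> ?L j = A"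
    and IH2: "\<And>j j'. j \<le> j' \<Longrightarrow> ?L j \<subseteq> ?L j'" using Suc by auto
  have step: "?L i \<subseteq> ?L (i+1)" for i using IH2 by simp
  note mp = mid_props[OF al IH1(1) IH1(1) step]
  have P1: "lev M A (Suc m) j \<in> events \<and> lev M A (Suc m) j \<subseteq> A \<and>
           prob (lev M A (Suc m) j) = real (min j (2^Suc m)) / 2^Suc m * prob A \<and>
           (j \<ge> 2^Suc m \<longrightarrow> lev M A (Suc m) j = A)" for j
  proof (cases "even j")
    case True
    then obtain i where j: "j = 2 * i" by blast
    have "min j (2^Suc m) = 2 * min i (2^m)" unfolding j by (auto simp: min_def)
    then have "real (min j (2^Suc m)) / 2^Suc m = real (min i (2^m)) / 2^m" by simp
    then show ?thesis using IH1[of i] j by auto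
  next
    case False
    then obtain i where j: "j = 2 * i + 1" by (metis oddE)
    have ji: "j div 2 = i" using j by simp
    show ?thesis
    proof (cases "i < 2^m")
      case True
      then have mi: "min i (2^m) = i" "min (i+1) (2^m) = i + 1" "min j (2^Suc m) = j" using j by auto
      have lj: "lev M A (Suc m) j = mid M (?L i) (?L (i+1))" using False ji by simp
      have "prob (lev M A (Suc m) j) = (real i / 2^m * prob A + real (i+1) / 2^m * prob A) / 2"
        unfolding lj mp(4) IH1(3) mi ..
      also have "\<dots> = real (2*i+1) / 2^Suc m * prob A" by (simp add: field_simps)
      also have "\<dots> = real (min j (2^Suc m)) / 2^Suc m * prob A" using mi(3) j by simp
      finally show ?thesis using lj mp(1,3)[of i] IH1(2)[of "i+1"] True j by auto
    next
      case False
      then have "?L i = A" "?L (i+1) = A" using IH1(4) by auto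
      moreover have "min j (2^Suc m) = 2^Suc m" using False j by auto
      ultimately show ?thesis using \<open>odd j\<close> ji A by (simp add: mid_same)
    qed
  qed
  have "lev M A (Suc m) j \<subseteq> lev M A (Suc m) (Suc j)" for j
  proof (cases "even j")
    case True
    then obtain i where j: "j = 2 * i" by blast
    then have "Suc j div 2 = i" by simp
    then show ?thesis using True j mp(2)[of i] by auto
  next
    case False
    then obtain i where j: "j = 2 * i + 1" by (metis oddE)
    then have "Suc j div 2 = i + 1" "j div 2 = i" by simp_all
    then show ?thesis using False j mp(3)[of i] by auto
  qed
  then have "j \<le> j' \<Longrightarrow> lev M A (Suc m) j \<subseteq> lev M A (Suc m) j'" for j j'
    by (rule lift_Suc_mono_le[of "lev M A (Suc m)"])
  then show ?case using P1 by blast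
qed

lemma lev_lift: "lev M A (m + k) (j * 2^k) = lev M A m j"
proof (induction k)
  case 0 show ?case by simp
next
  case (Suc k)
  have e: "j * 2 ^ Suc k = 2 * (j * 2^k)" by simp
  have "lev M A (Suc (m + k)) (2 * (j * 2^k)) = lev M A (m + k) (j * 2^k)"
    by (simp only: lev.simps even_mult_iff even_numeral if_True simp_thms nonzero_mult_div_cancel_left zero_neq_numeral)
  then show ?case using Suc e by simp
qed

lemma lev_cross_mono:
  assumes al: "atomless M" and A: "A \<in> events"
    and le: "real j / 2^m \<le> real j' / 2^m'"
  shows "lev M A m j \<subseteq> lev M A m' j'"
proof -
  have "real j * 2^m' \<le> real j' * 2^m" using le by (simp add: field_simps)
  then have "real (j * 2^m') \<le> real (j' * 2^m)" by simp
  then have "j * 2^m' \<le> j' * 2^m" by (simp only: of_nat_le_iff)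
  then have "lev M A (m + m') (j * 2^m') \<subseteq> lev M A (m' + m) (j' * 2^m)"
    using lev_props[OF al A, of "m + m'"] by (simp add: add.commute)
  then show ?thesis by (simp only: lev_lift)
qed

lemma uniform_exists:
  assumes al: "atomless M" and A: "A \<in> events"
  shows "\<exists>U\<in>borel_measurable M. (\<forall>\<omega>. 0 < U \<omega> \<and> U \<omega> < 1) \<and>
            (\<forall>t\<in>{0..1}. prob (A \<inter> {\<omega>\<in>space M. U \<omega> \<le> t}) = t * prob A)"
proof -
  note LP = lev_props[OF al A]
  note CM = lev_cross_mono[OF al A]
  have Asp: "A \<subseteq> space M" using A sets.sets_into_space by auto
  define R where "R \<omega> = {real j / 2^m | m j. \<omega> \<in> lev M A m j}" for \<omega>
  define U0 where "U0 \<omega> = Inf (R \<omega>)" for \<omega>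
  define k where "k t m = nat \<lfloor>t * 2^m\<rfloor> + 1" for t :: real and m :: nat
  define T where "T t m = lev M A m (k t m)" for t m
  define Ls where "Ls t = {\<omega>\<in>A. U0 \<omega> \<le> t}" for t
  have R1: "1 \<in> R \<omega>" if "\<omega> \<in> A" for \<omega>
    unfolding R_def using that by (auto intro!: exI[of _ 0] exI[of _ 1])
  have Rnn: "0 \<le> x" if "x \<in> R \<omega>" for x \<omega> using that unfolding R_def by auto
  have bddR: "bdd_below (R \<omega>)" for \<omega> using Rnn by (auto intro!: bdd_belowI[of _ 0])
  have U0nn: "0 \<le> U0 \<omega>" if "\<omega> \<in> A" for \<omega>
    unfolding U0_def using R1[OF that] Rnn by (intro cInf_greatest) auto
  have U0le1: "U0 \<omega> \<le> 1" if "\<omega> \<in> A" for \<omega>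
    unfolding U0_def using R1[OF that] bddR by (intro cInf_lower) auto
  have Tev: "T t m \<in> events" "T t m \<subseteq> A" for t m unfolding T_def using LP by auto
  have klow: "t < real (k t m) / 2^m" if "0 \<le> t" for t m
  proof -
    have "t * 2^m < real_of_int \<lfloor>t * 2^m\<rfloor> + 1" by (rule real_of_int_floor_add_one_gt)
    also have "real_of_int \<lfloor>t * 2^m\<rfloor> = real (nat \<lfloor>t * 2^m\<rfloor>)" using that by simp
    finally show ?thesis unfolding k_def by (simp add: field_simps)
  qed
  have kup: "real (k t m) / 2^m \<le> t + 1 / 2^m" if "0 \<le> t" for t m
  proof -
    have "real (nat \<lfloor>t * 2^m\<rfloor>) \<le> t * 2^m" using that by simp
    then show ?thesis unfolding k_def by (simp add: field_simps)
  qed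
  have key: "U0 \<omega> \<le> t \<longleftrightarrow> (\<forall>m. \<omega> \<in> T t m)" if \<omega>: "\<omega> \<in> A" and t: "0 \<le> t" for \<omega> t
  proof
    assume le: "U0 \<omega> \<le> t"
    show "\<forall>m. \<omega> \<in> T t m"
    proof
      fix m
      have "Inf (R \<omega>) < real (k t m) / 2^m" using le klow[OF t, of m] unfolding U0_def by simp
      moreover have "R \<omega> \<noteq> {}" using R1[OF \<omega>] by blast
      ultimately have "\<exists>x\<in>R \<omega>. x < real (k t m) / 2^m" using cInf_less_iff[OF _ bddR] by simp
      then obtain x where x: "x \<in> R \<omega>" "x < real (k t m) / 2^m" by blast
      from x(1) obtain m' j' where mj: "x = real j' / 2^m'" "\<omega> \<in> lev M A m' j'"
        unfolding R_def by blast
      have "lev M A m' j' \<subseteq> lev M A m (k t m)" using x(2) mj(1) by (intro CM) simp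
      then show "\<omega> \<in> T t m" unfolding T_def using mj(2) by blast
    qed
  next
    assume all: "\<forall>m. \<omega> \<in> T t m"
    have b: "U0 \<omega> \<le> t + 1 / 2^m" for m
    proof -
      have "\<omega> \<in> lev M A m (k t m)" using all unfolding T_def by blast
      then have "real (k t m) / 2^m \<in> R \<omega>" unfolding R_def by blast
      then have "U0 \<omega> \<le> real (k t m) / 2^m" unfolding U0_def using bddR by (intro cInf_lower)
      then show ?thesis using kup[OF t, of m] by simp
    qed
    show "U0 \<omega> \<le> t"
    proof (rule ccontr)
      assume "\<not> U0 \<omega> \<le> t"
      then obtain m where "(1/2::real)^m < U0 \<omega> - t" using real_arch_pow_inv[of "U0 \<omega> - t" "1/2"] by auto
      then show False using b[of m] by (simp add: power_one_over)
    qed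
  qed
  have Ls_eq: "Ls t = (\<Inter>m. T t m)" if "0 \<le> t" for t
  proof (intro equalityI subsetI)
    fix \<omega> assume "\<omega> \<in> Ls t"
    then have "\<omega> \<in> A" "U0 \<omega> \<le> t" unfolding Ls_def by auto
    then show "\<omega> \<in> (\<Inter>m. T t m)" using key[of \<omega> t] that by simp
  next
    fix \<omega> assume a: "\<omega> \<in> (\<Inter>m. T t m)"
    then have w: "\<omega> \<in> A" using Tev(2)[of t 0] by blast
    then have "U0 \<omega> \<le> t" using key[of \<omega> t] that a by simp
    then show "\<omega> \<in> Ls t" unfolding Ls_def using w by simp
  qed
  have Ls_neg: "Ls t = {}" if "t < 0" for t
  proof -
    { fix \<omega> assume "\<omega> \<in> A" "U0 \<omega> \<le> t" then have False using U0nn[of \<omega>] that by linarith }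
    then show ?thesis unfolding Ls_def by blast
  qed
  have Ls_ev: "Ls t \<in> events" for t
  proof (cases "t < 0")
    case True then show ?thesis using Ls_neg by simp
  next
    case False then show ?thesis using Ls_eq[of t] Tev by auto
  qed
  have Tdec: "decseq (T t)" if t: "0 \<le> t" for t
  proof (rule decseq_SucI)
    fix m
    have "real_of_int \<lfloor>t * 2^Suc m\<rfloor> \<le> t * 2^Suc m" by (rule of_int_floor_le)
    also have "\<dots> = 2 * (t * 2^m)" by simp
    also have "\<dots> < 2 * (real_of_int \<lfloor>t * 2^m\<rfloor> + 1)"
      using real_of_int_floor_add_one_gt[of "t * 2^m"] by (rule mult_strict_left_mono) simp
    also have "\<dots> = real_of_int (2 * \<lfloor>t * 2^m\<rfloor> + 2)" by simp
    finally have "\<lfloor>t * 2^Suc m\<rfloor> < 2 * \<lfloor>t * 2^m\<rfloor> + 2" by (simp only: of_int_less_iff)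
    then have "\<lfloor>t * 2^Suc m\<rfloor> \<le> 2 * \<lfloor>t * 2^m\<rfloor> + 1" by linarith
    moreover have "0 \<le> \<lfloor>t * 2^m\<rfloor>" "0 \<le> \<lfloor>t * 2^Suc m\<rfloor>" using t by simp_all
    moreover have h: "\<And>a b::int. a \<le> 2*b+1 \<Longrightarrow> 0 \<le> b \<Longrightarrow> nat a + 1 \<le> 2*(nat b+1)" by (auto split: split_nat)
    ultimately have "k t (Suc m) \<le> 2 * k t m" unfolding k_def by blast
    then have "real (k t (Suc m)) \<le> 2 * real (k t m)" by linarith
    then have "real (k t (Suc m)) / 2^Suc m \<le> real (k t m) / 2^m" by (simp add: field_simps)
    then show "T t (Suc m) \<subseteq> T t m" unfolding T_def by (rule CM)
  qed
  have probLs: "prob (Ls t) = t * prob A" if t: "0 \<le> t" "t \<le> 1" for t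
  proof (cases "t = 1")
    case True
    have "Ls t = A" unfolding Ls_def using U0le1 True by auto
    then show ?thesis using True by simp
  next
    case False
    then have t1: "t < 1" using t by simp
    have kle: "k t m \<le> 2^m" for m
    proof -
      have "t * 2^m < 2^m" using t1 by simp
      then have "\<lfloor>t * 2^m\<rfloor> < 2^m" by (simp add: floor_less_iff)
      moreover have "0 \<le> \<lfloor>t * 2^m\<rfloor>" using t by simp
      ultimately have "nat \<lfloor>t * 2^m\<rfloor> < 2^m" by (metis nat_less_iff of_nat_numeral of_nat_power)
      then show ?thesis unfolding k_def by linarith
    qed
    have pT: "prob (T t m) = real (k t m) / 2^m * prob A" for m
      using LP kle[of m] unfolding T_def by (simp add: min_absorb1)
    have "(\<lambda>m. real (k t m) / 2^m) \<longlonglongrightarrow> t"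
    proof (rule tendsto_sandwich[of "\<lambda>_. t" _ _ "\<lambda>m. t + (1/2)^m"])
      show "\<forall>\<^sub>F m in sequentially. t \<le> real (k t m) / 2^m"
        by (intro always_eventually allI less_imp_le klow t(1))
      have "real (k t m) / 2^m \<le> t + (1/2)^m" for m using kup[OF t(1), of m] by (simp add: power_one_over)
      then show "\<forall>\<^sub>F m in sequentially. real (k t m) / 2^m \<le> t + (1/2)^m"
        by (intro always_eventually allI)
      show "(\<lambda>m. t + (1/2::real)^m) \<longlonglongrightarrow> t"
        using tendsto_add[OF tendsto_const LIMSEQ_power_zero[of "1/2::real"]] by simp
    qed simp
    then have "(\<lambda>m. prob (T t m)) \<longlonglongrightarrow> t * prob A" unfolding pT by (intro tendsto_mult_right)
    moreover have "(\<lambda>m. prob (T t m)) \<longlonglongrightarrow> prob (\<Inter>m. T t m)"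
      using Tev Tdec[OF t(1)] by (intro finite_Lim_measure_decseq) auto
    ultimately have "prob (\<Inter>m. T t m) = t * prob A" using LIMSEQ_unique by blast
    then show ?thesis using Ls_eq[OF t(1)] by simp
  qed
  define U0' where "U0' \<omega> = (if \<omega> \<in> A then U0 \<omega> else 0)" for \<omega>
  have U0'm: "U0' \<in> borel_measurable M"
  proof (rule borel_measurable_iff_le[THEN iffD2], intro allI)
    fix s
    have "{w \<in> space M. U0' w \<le> s} = Ls s \<union> (if 0 \<le> s then space M - A else {})"
      unfolding U0'_def Ls_def using Asp by auto
    then show "{w \<in> space M. U0' w \<le> s} \<in> events" using Ls_ev A by auto
  qed
  define U where "U \<omega> = (if \<omega> \<in> A \<and> 0 < U0' \<omega> \<and> U0' \<omega> < 1 then U0' \<omega> else 1/2)" for \<omega>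
  have Um: "U \<in> borel_measurable M" unfolding U_def using U0'm A by measurable
  have Ur: "0 < U \<omega> \<and> U \<omega> < 1" for \<omega> unfolding U_def by auto
  define N where "N = {\<omega>\<in>A. U0 \<omega> \<le> 0 \<or> 1 \<le> U0 \<omega>}"
  have N1ev: "{\<omega>\<in>A. 1 \<le> U0 \<omega>} \<in> events"
  proof -
    have "{\<omega>\<in>A. 1 \<le> U0 \<omega>} = A \<inter> {\<omega>\<in>space M. 1 \<le> U0' \<omega>}" unfolding U0'_def using Asp by auto
    then show ?thesis using U0'm A by auto
  qed
  have N1: "prob {\<omega>\<in>A. 1 \<le> U0 \<omega>} = 0"
  proof (rule ccontr)
    let ?p = "prob {\<omega>\<in>A. 1 \<le> U0 \<omega>}"
    assume "?p \<noteq> 0"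
    then have p0: "?p > 0" by (simp add: zero_less_measure_iff)
    have pA: "?p \<le> prob A" using A N1ev by (intro finite_measure_mono) auto
    then have PA: "prob A > 0" using p0 by simp
    define t where "t = 1 - ?p / (2 * prob A)"
    have t01: "0 \<le> t" "t < 1" using p0 pA PA unfolding t_def by (auto simp: field_simps)
    have "Ls t \<subseteq> A - {\<omega>\<in>A. 1 \<le> U0 \<omega>}" unfolding Ls_def using t01 by auto
    then have "prob (Ls t) \<le> prob (A - {\<omega>\<in>A. 1 \<le> U0 \<omega>})" using A N1ev by (intro finite_measure_mono) auto
    also have "\<dots> = prob A - ?p" by (rule finite_measure_Diff[OF A N1ev]) blast
    finally have "t * prob A \<le> prob A - ?p" using probLs[of t] t01 by simp
    then show False using p0 PA mult_pos_pos[OF PA p0] unfolding t_def by (simp add: field_simps)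
  qed
  have Nnull: "N \<in> null_sets M"
  proof -
    have Neq: "N = Ls 0 \<union> {\<omega>\<in>A. 1 \<le> U0 \<omega>}" unfolding N_def Ls_def by auto
    moreover have "prob (Ls 0) = 0" using probLs[of 0] by simp
    moreover have "N \<in> events" using Neq Ls_ev N1ev by simp
    ultimately have "prob N \<le> 0 + 0"
      using Neq Ls_ev N1ev N1 measure_subadditive[of "Ls 0" M "{\<omega>\<in>A. 1 \<le> U0 \<omega>}"] by simp
    then have "prob N = 0" using measure_nonneg[of M N] by linarith
    then show ?thesis using \<open>N \<in> events\<close> by (simp add: emeasure_eq_measure null_setsI)
  qed
  have Pt: "prob (A \<inter> {\<omega>\<in>space M. U \<omega> \<le> t}) = t * prob A" if t: "0 \<le> t" "t \<le> 1" for t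
  proof -
    have ev: "A \<inter> {\<omega>\<in>space M. U \<omega> \<le> t} \<in> events" using Um A by auto
    have "(A \<inter> {\<omega>\<in>space M. U \<omega> \<le> t}) - N = Ls t - N"
      unfolding N_def Ls_def U_def U0'_def using Asp by auto
    then have "prob ((A \<inter> {\<omega>\<in>space M. U \<omega> \<le> t}) - N) = prob (Ls t - N)" by simp
    then show ?thesis using measure_Diff_null_set[OF ev Nnull] measure_Diff_null_set[OF Ls_ev Nnull] probLs[OF t]
      by simp
  qed
  show ?thesis using Um Ur Pt by (intro bexI[of _ U] conjI allI ballI) auto
qed

end



definition qf :: "real measure \<Rightarrow> real \<Rightarrow> real" where
  "qf N u = Inf {x. u \<le> cdf N x}"

context prob_space begin

lemma quantile_on:
  assumes N: "real_distribution N" and Um: "U \<in> borel_measurable M"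
    and Ur: "\<And>\<omega>. 0 < U \<omega> \<and> U \<omega> < 1"
    and Ut: "\<And>t. 0 \<le> t \<Longrightarrow> t \<le> 1 \<Longrightarrow> prob (A \<inter> {\<omega>\<in>space M. U \<omega> \<le> t}) = t * prob A"
    and A: "A \<in> events"
  shows "(\<lambda>\<omega>. qf N (U \<omega>)) \<in> borel_measurable M"
    "\<And>B. B \<in> sets borel \<Longrightarrow> prob (A \<inter> {\<omega>\<in>space M. qf N (U \<omega>) \<in> B}) = prob A * measure N B"
proof -
  interpret N: cdf_distribution N unfolding cdf_distribution_def by (rule N)
  have qI: "qf N = N.I" unfolding qf_def by (rule ext) simp
  have U01: "U \<in> measurable M (restrict_space borel {0<..<1})"
    using Um Ur by (intro measurable_restrict_space2) auto
  show Qm: "(\<lambda>\<omega>. qf N (U \<omega>)) \<in> borel_measurable M"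
    unfolding qI by (rule measurable_comp[OF U01 N.measurable_CI, unfolded comp_def])
  fix B :: "real set" assume B: "B \<in> sets borel"
  have ev: "{\<omega>\<in>space M. qf N (U \<omega>) \<in> B} \<in> events" using Qm B by measurable
  show "prob (A \<inter> {\<omega>\<in>space M. qf N (U \<omega>) \<in> B}) = prob A * measure N B"
  proof (cases "prob A = 0")
    case True
    have "prob (A \<inter> {\<omega>\<in>space M. qf N (U \<omega>) \<in> B}) \<le> prob A"
      using A ev by (intro finite_measure_mono) auto
    then show ?thesis using True measure_nonneg[of M "A \<inter> {\<omega>\<in>space M. qf N (U \<omega>) \<in> B}"] by simp
  next
    case False
    then have PA: "prob A > 0" using measure_nonneg[of M A] by linarith
    let ?MA = "uniform_measure M A"
    have e0: "emeasure M A \<noteq> 0" using PA A by (simp add: emeasure_eq_measure)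
    have einf: "emeasure M A \<noteq> \<infinity>" by (simp add: emeasure_eq_measure)
    interpret MA: prob_space ?MA by (rule prob_space_uniform_measure[OF e0 einf])
    have QmA: "(\<lambda>\<omega>. qf N (U \<omega>)) \<in> borel_measurable ?MA" using Qm by (simp cong: measurable_cong_sets)
    let ?D = "distr ?MA borel (\<lambda>\<omega>. qf N (U \<omega>))"
    have RD: "real_distribution ?D"
      unfolding real_distribution_def real_distribution_axioms_def using MA.prob_space_distr[OF QmA] by simp
    have "cdf ?D x = cdf N x" for x
    proof -
      have set_eq: "{\<omega>\<in>space M. qf N (U \<omega>) \<le> x} = {\<omega>\<in>space M. U \<omega> \<le> cdf N x}"
      proof (rule Collect_cong)
        fix \<omega>
        have "U \<omega> \<le> cdf N x \<longleftrightarrow> N.I (U \<omega>) \<le> x" by (rule N.pseudoinverse) (use Ur[of \<omega>] in auto)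
        then show "(\<omega> \<in> space M \<and> qf N (U \<omega>) \<le> x) = (\<omega> \<in> space M \<and> U \<omega> \<le> cdf N x)"
          unfolding qI by blast
      qed
      have ev2: "{\<omega>\<in>space M. U \<omega> \<le> cdf N x} \<in> events" using Um by measurable
      have "cdf ?D x = measure ?MA ((\<lambda>\<omega>. qf N (U \<omega>)) -` {..x} \<inter> space ?MA)"
        unfolding cdf_def using QmA by (intro measure_distr) auto
      also have "\<dots> = measure ?MA {\<omega>\<in>space M. qf N (U \<omega>) \<le> x}" by (rule arg_cong[where f="measure ?MA"]) auto
      also have "\<dots> = measure ?MA {\<omega>\<in>space M. U \<omega> \<le> cdf N x}" by (simp only: set_eq)
      also have "\<dots> = prob (A \<inter> {\<omega>\<in>space M. U \<omega> \<le> cdf N x}) / prob A"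
        using e0 einf ev2 by simp
      also have "\<dots> = cdf N x" using Ut[of "cdf N x"] PA N.cdf_nonneg N.cdf_bounded_prob by simp
      finally show ?thesis .
    qed
    then have DN: "?D = N" using cdf_unique[OF RD N] by auto
    have "measure N B = measure ?D B" using DN by simp
    also have "\<dots> = measure ?MA ((\<lambda>\<omega>. qf N (U \<omega>)) -` B \<inter> space ?MA)"
      using QmA B by (intro measure_distr) auto
    also have "\<dots> = measure ?MA {\<omega>\<in>space M. qf N (U \<omega>) \<in> B}" by (rule arg_cong[where f="measure ?MA"]) auto
    also have "\<dots> = prob (A \<inter> {\<omega>\<in>space M. qf N (U \<omega>) \<in> B}) / prob A"
      using e0 einf ev by simp
    finally show ?thesis using PA by simp
  qed
qed

end



definition dgi :: "nat \<Rightarrow> real \<Rightarrow> int" where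
  "dgi k y = \<lfloor>2^(k+1) * y\<rfloor> - 2 * \<lfloor>2^k * y\<rfloor>"

lemma dgi01: "dgi k y = 0 \<or> dgi k y = 1"
proof -
  let ?z = "2^k * y"
  have e: "2^(k+1) * y = 2 * ?z" by simp
  have a1: "real_of_int \<lfloor>?z\<rfloor> \<le> ?z" "?z < real_of_int \<lfloor>?z\<rfloor> + 1"
    by (rule of_int_floor_le, rule real_of_int_floor_add_one_gt)
  have b1: "real_of_int \<lfloor>2 * ?z\<rfloor> \<le> 2 * ?z" "2 * ?z < real_of_int \<lfloor>2 * ?z\<rfloor> + 1"
    by (rule of_int_floor_le, rule real_of_int_floor_add_one_gt)
  have "real_of_int \<lfloor>2 * ?z\<rfloor> < 2 * real_of_int \<lfloor>?z\<rfloor> + 2" using a1 b1 by linarith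
  then have "real_of_int \<lfloor>2 * ?z\<rfloor> < real_of_int (2 * \<lfloor>?z\<rfloor> + 2)" by simp
  then have u: "\<lfloor>2 * ?z\<rfloor> < 2 * \<lfloor>?z\<rfloor> + 2" by (simp only: of_int_less_iff)
  have "2 * real_of_int \<lfloor>?z\<rfloor> < real_of_int \<lfloor>2 * ?z\<rfloor> + 1" using a1 b1 by linarith
  then have "real_of_int (2 * \<lfloor>?z\<rfloor>) < real_of_int (\<lfloor>2 * ?z\<rfloor> + 1)" by simp
  then have l: "2 * \<lfloor>?z\<rfloor> < \<lfloor>2 * ?z\<rfloor> + 1" by (simp only: of_int_less_iff)
  show ?thesis unfolding dgi_def e using u l by linarith
qed

lemma dgi_partial: "(\<Sum>k<N. real_of_int (dgi k y) / 2^(k+1)) = real_of_int \<lfloor>2^N * y\<rfloor> / 2^N - real_of_int \<lfloor>y\<rfloor>"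
proof (induction N)
  case 0 then show ?case by simp
next
  case (Suc N)
  have "real_of_int (dgi N y) / 2^(N+1) = real_of_int \<lfloor>2^(N+1) * y\<rfloor> / 2^(N+1) - real_of_int \<lfloor>2^N * y\<rfloor> / 2^N"
    unfolding dgi_def by (simp add: field_simps)
  then show ?case using Suc by simp
qed

lemma dgi_sums: assumes "0 \<le> y" "y < 1" shows "(\<lambda>k. real_of_int (dgi k y) / 2^(k+1)) sums y"
proof -
  have fl: "\<lfloor>y\<rfloor> = 0" using assms by (simp add: floor_eq_iff)
  have "(\<lambda>N. real_of_int \<lfloor>2^N * y\<rfloor> / 2^N) \<longlonglongrightarrow> y"
  proof (rule tendsto_sandwich[of "\<lambda>N. y - (1/2)^N" _ _ "\<lambda>_. y"])
    have "y - (1/2)^N \<le> real_of_int \<lfloor>2^N * y\<rfloor> / 2^N" for N :: nat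
    proof -
      have "2^N * y < real_of_int \<lfloor>2^N * y\<rfloor> + 1" by (rule real_of_int_floor_add_one_gt)
      then have "2^N * y - 1 \<le> real_of_int \<lfloor>2^N * y\<rfloor>" by linarith
      then have "(2^N * y - 1) / 2^N \<le> real_of_int \<lfloor>2^N * y\<rfloor> / 2^N" by (rule divide_right_mono) simp
      moreover have "(2^N * y - 1) / 2^N = y - (1/2)^N" by (simp add: field_simps power_one_over)
      ultimately show ?thesis by simp
    qed
    then show "\<forall>\<^sub>F N in sequentially. y - (1/2)^N \<le> real_of_int \<lfloor>2^N * y\<rfloor> / 2^N"
      by (intro always_eventually allI)
    have "real_of_int \<lfloor>2^N * y\<rfloor> / 2^N \<le> y" for N :: nat
    proof -
      have "real_of_int \<lfloor>2^N * y\<rfloor> \<le> 2^N * y" by (rule of_int_floor_le)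
      then show ?thesis by (simp add: field_simps)
    qed
    then show "\<forall>\<^sub>F N in sequentially. real_of_int \<lfloor>2^N * y\<rfloor> / 2^N \<le> y"
      by (intro always_eventually allI)
    show "(\<lambda>N. y - (1/2::real)^N) \<longlonglongrightarrow> y"
      using tendsto_diff[OF tendsto_const LIMSEQ_power_zero[of "1/2::real"]] by simp
  qed simp
  then show ?thesis unfolding sums_def dgi_partial fl by simp
qed

lemma b4_digits:
  fixes a :: "nat \<Rightarrow> int"
  assumes a: "\<And>m. a m = 0 \<or> a m = 1"
  shows "\<lfloor>4^(m+1) * (\<Sum>j. real_of_int (a j) / 4^(j+1))\<rfloor> - 4 * \<lfloor>4^m * (\<Sum>j. real_of_int (a j) / 4^(j+1))\<rfloor> = a m"
proof -
  define f where "f j = real_of_int (a j) / 4^(j+1)" for j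
  define c where "c = (\<Sum>j. f j)"
  have fnn: "0 \<le> f j" for j using a[of j] unfolding f_def by auto
  have fle: "f j \<le> (1/4)^(j+1)" for j using a[of j] unfolding f_def by (auto simp: power_one_over)
  have sg: "summable (\<lambda>j. (1/4::real)^(j+1))" by (simp add: summable_geometric)
  have sf: "summable f"
  proof (rule summable_comparison_test'[OF sg, of 0])
    fix j show "norm (f j) \<le> (1/4)^(j+1)" using fnn[of j] fle[of j] by simp
  qed
  define P where "P m = (\<Sum>j<m. a j * 4^(m - Suc j))" for m
  have fl: "\<lfloor>4^m * c\<rfloor> = P m" for m
  proof -
    define r where "r = (\<Sum>j. f (j + m))"
    have sfm: "summable (\<lambda>j. f (j + m))" using sf by (rule summable_ignore_initial_segment)
    have c_eq: "c = r + (\<Sum>j<m. f j)" unfolding c_def r_def by (rule suminf_split_initial_segment[OF sf])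
    have "4^m * (\<Sum>j<m. f j) = (\<Sum>j<m. 4^m * f j)" by (simp add: sum_distrib_left)
    also have "\<dots> = (\<Sum>j<m. real_of_int (a j * 4^(m - Suc j)))"
    proof (rule sum.cong[OF refl])
      fix j assume "j \<in> {..<m}"
      then have "(4::real)^m = 4^((j+1) + (m - Suc j))" by simp
      also have "\<dots> = 4^(j+1) * 4^(m - Suc j)" by (rule power_add)
      finally have "(4::real)^m = 4^(j+1) * 4^(m - Suc j)" .
      then show "4^m * f j = real_of_int (a j * 4^(m - Suc j))" unfolding f_def by simp
    qed
    also have "\<dots> = real_of_int (P m)" unfolding P_def by simp
    finally have ip: "4^m * (\<Sum>j<m. f j) = real_of_int (P m)" .
    have rnn: "0 \<le> 4^m * r" unfolding r_def using fnn sfm by (simp add: suminf_nonneg)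
    have "r \<le> (\<Sum>j. (1/4::real)^(j + m + 1))"
      unfolding r_def using fle sfm summable_ignore_initial_segment[OF sg, of m]
      by (intro suminf_le) (auto simp: add.assoc)
    also have "\<dots> = (1/4)^m * (\<Sum>j. (1/4::real)^(j+1))"
      by (subst suminf_mult[symmetric]) (use sg in \<open>auto simp: power_add mult_ac\<close>)
    also have "(\<Sum>j. (1/4::real)^(j+1)) = 1/3"
    proof -
      have "(\<Sum>j. (1/4::real)^(j+1)) = (1/4) * (\<Sum>j. (1/4::real)^j)"
        by (subst suminf_mult[symmetric]) (auto simp: summable_geometric)
      also have "\<dots> = 1/3" by (simp add: suminf_geometric)
      finally show ?thesis .
    qed
    finally have "4^m * r \<le> 1/3" by (simp add: power_one_over field_simps)
    have "4^m * c = real_of_int (P m) + 4^m * r" using c_eq ip by (simp add: distrib_left)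
    then show ?thesis using rnn \<open>4^m * r \<le> 1/3\<close> by (simp add: floor_eq_iff)
  qed
  have "P (Suc m) = a m + 4 * P m"
  proof -
    have "P (Suc m) = (\<Sum>j<Suc m. a j * 4^(Suc m - Suc j))" unfolding P_def ..
    also have "\<dots> = a m + (\<Sum>j<m. a j * 4^(Suc m - Suc j))" by simp
    also have "(\<Sum>j<m. a j * 4^(Suc m - Suc j)) = 4 * P m"
      unfolding P_def sum_distrib_left
    proof (rule sum.cong[OF refl])
      fix j assume "j \<in> {..<m}"
      then have "Suc m - Suc j = Suc (m - Suc j)" by simp
      then show "a j * 4^(Suc m - Suc j) = 4 * (a j * 4^(m - Suc j))" by simp
    qed
    finally show ?thesis .
  qed
  then show ?thesis using fl[of "Suc m"] fl[of m] unfolding c_def f_def by simp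
qed

definition gmap :: "real \<Rightarrow> real" where "gmap x = arctan x / pi + 1/2"
definition ginv :: "real \<Rightarrow> real" where "ginv y = sin (pi * (y - 1/2)) / cos (pi * (y - 1/2))"

lemma ginv_gmap: "ginv (gmap x) = x"
proof -
  have "pi * (gmap x - 1/2) = arctan x" unfolding gmap_def by (simp add: field_simps)
  then show ?thesis unfolding ginv_def using tan_arctan[of x] by (simp add: tan_def)
qed

lemma gmap_range: "0 \<le> gmap x \<and> gmap x < 1"
proof -
  have "- (pi/2) < arctan x" "arctan x < pi/2" by (rule arctan_lbound, rule arctan_ubound)
  have "(- (pi/2)) / pi < arctan x / pi" by (rule divide_strict_right_mono[OF arctan_lbound]) simp
  moreover have "arctan x / pi < (pi/2) / pi" by (rule divide_strict_right_mono[OF arctan_ubound]) simp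
  moreover have "(- (pi/2)) / pi = -1/2" "(pi/2) / pi = 1/2" by simp_all
  ultimately show ?thesis unfolding gmap_def by linarith
qed

definition enc :: "nat \<Rightarrow> (nat \<Rightarrow> real) \<Rightarrow> real" where
  "enc n x = (\<Sum>m. real_of_int (dgi (m div n) (gmap (x (m mod n)))) / 4^(m+1))"

definition dec :: "nat \<Rightarrow> nat \<Rightarrow> real \<Rightarrow> real" where
  "dec n i c = ginv (\<Sum>k. real_of_int (\<lfloor>4^(k*n+i+1) * c\<rfloor> - 4 * \<lfloor>4^(k*n+i) * c\<rfloor>) / 2^(k+1))"

lemma dec_enc:
  assumes n: "0 < n" and i: "i < n"
  shows "dec n i (enc n x) = x i"
proof -
  define a where "a m = dgi (m div n) (gmap (x (m mod n)))" for m
  have a01: "a m = 0 \<or> a m = 1" for m unfolding a_def by (rule dgi01)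
  have enc_eq: "enc n x = (\<Sum>j. real_of_int (a j) / 4^(j+1))" unfolding enc_def a_def ..
  have "\<lfloor>4^(k*n+i+1) * enc n x\<rfloor> - 4 * \<lfloor>4^(k*n+i) * enc n x\<rfloor> = dgi k (gmap (x i))" for k
  proof -
    have "(k*n+i) div n = k" "(k*n+i) mod n = i" using n i by auto
    then have "a (k*n+i) = dgi k (gmap (x i))" unfolding a_def by simp
    then show ?thesis unfolding enc_eq using b4_digits[OF a01, of "k*n+i"] by simp
  qed
  then have "dec n i (enc n x) = ginv (\<Sum>k. real_of_int (dgi k (gmap (x i))) / 2^(k+1))"
    unfolding dec_def by simp
  also have "(\<Sum>k. real_of_int (dgi k (gmap (x i))) / 2^(k+1)) = gmap (x i)"
    using dgi_sums[of "gmap (x i)"] gmap_range[of "x i"] by (simp add: sums_iff)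
  finally show ?thesis by (simp add: ginv_gmap)
qed

lemma arctan_measurable[measurable]: "arctan \<in> borel_measurable borel"
  by (intro borel_measurable_continuous_onI continuous_intros)

lemma gmap_measurable[measurable]: "gmap \<in> borel_measurable borel"
  unfolding gmap_def[abs_def] by measurable

lemma ginv_measurable[measurable]: "ginv \<in> borel_measurable borel"
  unfolding ginv_def[abs_def] by measurable

lemma dgi_measurable[measurable]: "(\<lambda>y. real_of_int (dgi k y)) \<in> borel_measurable borel"
  unfolding dgi_def by measurable

lemma enc_measurable:
  assumes "\<And>i. X i \<in> borel_measurable M"
  shows "(\<lambda>\<omega>. enc n (\<lambda>i. X i \<omega>)) \<in> borel_measurable M"
  unfolding enc_def using assms by measurable

lemma dec_measurable[measurable]: "dec n i \<in> borel_measurable borel"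
  unfolding dec_def[abs_def] by measurable




lemma sum_rot1:
  fixes n :: nat and g :: "nat \<Rightarrow> real"
  assumes "0 < n"
  shows "(\<Sum>k<n. g ((k+1) mod n)) = (\<Sum>k<n. (g k :: real))"
proof -
  obtain m where n: "n = Suc m" using assms by (cases n) auto
  have "(\<Sum>k<Suc m. g ((k+1) mod Suc m)) = (\<Sum>k<m. g ((k+1) mod Suc m)) + g ((m+1) mod Suc m)"
    by simp
  also have "(\<Sum>k<m. g ((k+1) mod Suc m)) = (\<Sum>k<m. g (Suc k))"
    by (rule sum.cong) auto
  also have "g ((m+1) mod Suc m) = g 0" by simp
  also have "(\<Sum>k<m. g (Suc k)) + g 0 = (\<Sum>k<Suc m. g k)"
    by (subst sum.lessThan_Suc_shift) simp
  finally show ?thesis unfolding n .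
qed

lemma sum_rot:
  fixes n i :: nat and f :: "nat \<Rightarrow> real"
  assumes "0 < n"
  shows "(\<Sum>k<n. f ((i+k) mod n)) = (\<Sum>k<n. (f k :: real))"
proof (induction i)
  case 0
  have "(\<Sum>k<n. f ((0+k) mod n)) = (\<Sum>k<n. f k)" by (rule sum.cong) auto
  then show ?case .
next
  case (Suc i)
  have "(\<Sum>k<n. f ((Suc i + k) mod n)) = (\<Sum>k<n. (\<lambda>k'. f ((i + k') mod n)) ((k+1) mod n))"
    by (rule sum.cong[OF refl]) (simp add: mod_add_right_eq)
  also have "\<dots> = (\<Sum>k<n. f ((i + k) mod n))" by (rule sum_rot1[OF assms])
  finally show ?case using Suc by simp
qed

lemma cdf_distr_eq:
  assumes "f \<in> borel_measurable M"
  shows "cdf (distr M borel f) x = measure M {\<omega>\<in>space M. f \<omega> \<le> x}"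
proof -
  have "cdf (distr M borel f) x = measure M (f -` {..x} \<inter> space M)"
    unfolding cdf_def by (rule measure_distr[OF assms]) simp
  also have "f -` {..x} \<inter> space M = {\<omega>\<in>space M. f \<omega> \<le> x}" by auto
  finally show ?thesis .
qed

lemma measure_distr_eq:
  assumes "f \<in> borel_measurable M" "B \<in> sets borel"
  shows "measure (distr M borel f) B = measure M {\<omega>\<in>space M. f \<omega> \<in> B}"
proof -
  have "measure (distr M borel f) B = measure M (f -` B \<inter> space M)"
    by (rule measure_distr[OF assms(1)]) (simp add: assms(2))
  also have "f -` B \<inter> space M = {\<omega>\<in>space M. f \<omega> \<in> B}" by auto
  finally show ?thesis .
qed

theorem corollary3:
  fixes M :: "'a measure" and n :: nat and F :: "nat \<Rightarrow> real \<Rightarrow> real"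
    and L :: "nat \<Rightarrow> nat \<Rightarrow> real"
  assumes "prob_space M" and "atomless M"
    and "\<forall>i<n. is_cdf (F i)"
    and "doubly_stochastic n L"
  shows "Dn M n (mat_mix n L F) \<subseteq> Dn M n (\<lambda>_ x. (1 / real n) * (\<Sum>i<n. F i x))"
proof
  interpret P: prob_space M by fact
  note al = \<open>atomless M\<close>
  fix H assume "H \<in> Dn M n (mat_mix n L F)"
  then obtain X where Xm: "\<And>i. i < n \<Longrightarrow> X i \<in> borel_measurable M"
    and Xc: "\<And>i. i < n \<Longrightarrow> cdf (distr M borel (X i)) = mat_mix n L F i"
    and H: "H = cdf (distr M borel (\<lambda>\<omega>. \<Sum>i<n. X i \<omega>))"
    unfolding Dn_def by blast
  show "H \<in> Dn M n (\<lambda>_ x. (1 / real n) * (\<Sum>i<n. F i x))"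
  proof (cases "n = 0")
    case True
    then show ?thesis unfolding Dn_def H by auto
  next
    case False
    then have n0: "0 < n" by simp
    define X' where "X' i = X (i mod n)" for i
    have X'm: "X' i \<in> borel_measurable M" for i using Xm n0 unfolding X'_def by simp
    define W where "W \<omega> = enc n (\<lambda>i. X' i \<omega>)" for \<omega>
    have Wm[measurable]: "W \<in> borel_measurable M" unfolding W_def by (rule enc_measurable[OF X'm])
    have decW: "dec n i (W \<omega>) = X i \<omega>" if "i < n" for i \<omega>
      unfolding W_def using dec_enc[OF n0 that] that by (simp add: X'_def)
    define \<nu> where "\<nu> = distr M borel W"
    have RN: "real_distribution \<nu>"
      unfolding \<nu>_def real_distribution_def real_distribution_axioms_def
      using P.prob_space_distr[OF Wm] by simp
    have nuB: "measure \<nu> B = P.prob {\<omega>\<in>space M. W \<omega> \<in> B}" if "B \<in> sets borel" for B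
      unfolding \<nu>_def by (rule measure_distr_eq[OF Wm that])
    obtain U0 where U0m[measurable]: "U0 \<in> borel_measurable M" and U0r: "\<forall>\<omega>. 0 < U0 \<omega> \<and> U0 \<omega> < 1"
      and U0t: "\<forall>t\<in>{0..1}. P.prob (space M \<inter> {\<omega>\<in>space M. U0 \<omega> \<le> t}) = t * P.prob (space M)"
      using P.uniform_exists[OF al sets.top] by blast
    have U0t': "P.prob {\<omega>\<in>space M. U0 \<omega> \<le> t} = t" if "0 \<le> t" "t \<le> 1" for t
    proof -
      have "space M \<inter> {\<omega>\<in>space M. U0 \<omega> \<le> t} = {\<omega>\<in>space M. U0 \<omega> \<le> t}" by auto
      then show ?thesis using U0t that P.prob_space by simp
    qed
    define A where "A k = {\<omega>\<in>space M. real k < real n * U0 \<omega> \<and> real n * U0 \<omega> \<le> real k + 1}" for k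
    have Aev[measurable]: "A k \<in> sets M" for k unfolding A_def by measurable
    have nle: "real n * U0 \<omega> \<le> c \<longleftrightarrow> U0 \<omega> \<le> c / real n" for \<omega> c
      using n0 by (simp add: pos_le_divide_eq mult.commute)
    have nlt: "c < real n * U0 \<omega> \<longleftrightarrow> c / real n < U0 \<omega>" for \<omega> c
      using n0 by (simp add: pos_divide_less_eq mult.commute)
    have Ap: "P.prob (A k) = 1 / real n" if "k < n" for k
    proof -
      have e: "A k = {\<omega>\<in>space M. U0 \<omega> \<le> (real k + 1) / real n} - {\<omega>\<in>space M. U0 \<omega> \<le> real k / real n}"
        unfolding A_def nle nlt by (auto simp: not_le)
      have kn: "real k + 1 \<le> real n" using that by linarith
      have le1: "(real k + 1) / real n \<le> 1" using kn n0 by simp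
      have le2: "real k / real n \<le> (real k + 1) / real n" by (rule divide_right_mono) simp_all
      have p1: "P.prob {\<omega>\<in>space M. U0 \<omega> \<le> (real k + 1) / real n} = (real k + 1) / real n"
        using le1 by (intro U0t') simp_all
      have p2: "P.prob {\<omega>\<in>space M. U0 \<omega> \<le> real k / real n} = real k / real n"
        using le1 le2 by (intro U0t') simp_all
      have sub: "{\<omega>\<in>space M. U0 \<omega> \<le> real k / real n} \<subseteq> {\<omega>\<in>space M. U0 \<omega> \<le> (real k + 1) / real n}"
        using le2 by auto
      have "P.prob (A k) = P.prob {\<omega>\<in>space M. U0 \<omega> \<le> (real k + 1) / real n} - P.prob {\<omega>\<in>space M. U0 \<omega> \<le> real k / real n}"
        unfolding e by (rule P.finite_measure_Diff[OF _ _ sub]) simp_all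
      then have "P.prob (A k) = (real k + 1) / real n - real k / real n" using p1 p2 by simp
      then show ?thesis by (simp add: diff_divide_distrib[symmetric])
    qed
    have Adisj: "A k \<inter> A k' = {}" if "k \<noteq> k'" for k k'
    proof (rule ccontr)
      assume "A k \<inter> A k' \<noteq> {}"
      then obtain \<omega> where "\<omega> \<in> A k" "\<omega> \<in> A k'" by blast
      then have "real k < real k' + 1" "real k' < real k + 1" unfolding A_def by auto
      then have "k < k' + 1" "k' < k + 1" by linarith+
      then show False using that by simp
    qed
    have Acover: "\<exists>k<n. \<omega> \<in> A k" if \<omega>: "\<omega> \<in> space M" for \<omega>
    proof -
      define c where "c = \<lceil>real n * U0 \<omega>\<rceil>"
      have pos: "0 < real n * U0 \<omega>" "real n * U0 \<omega> < real n" using U0r n0 by auto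
      have c1: "real_of_int c - 1 < real n * U0 \<omega>" "real n * U0 \<omega> \<le> real_of_int c"
        unfolding c_def by (linarith, rule le_of_int_ceiling)
      have "0 < c" using pos c1 by linarith
      have "real_of_int c < real n + 1" using pos c1 by linarith
      then have cn: "c \<le> int n" by linarith
      define k where "k = nat c - 1"
      have rk: "real k = real_of_int c - 1" unfolding k_def using \<open>0 < c\<close> by (simp add: of_nat_diff)
      have "k < n" unfolding k_def using cn \<open>0 < c\<close> by linarith
      moreover have "\<omega> \<in> A k" unfolding A_def using rk c1 \<omega> by auto
      ultimately show ?thesis by blast
    qed
    have sumA: "P.prob E = (\<Sum>k<n. P.prob (A k \<inter> E))" if E: "E \<in> sets M" for E
    proof -
      have "E = (\<Union>k\<in>{..<n}. A k \<inter> E)" using Acover sets.sets_into_space[OF E] by blast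
      then have "P.prob E = P.prob (\<Union>k\<in>{..<n}. A k \<inter> E)" by simp
      also have "\<dots> = (\<Sum>k<n. P.prob (A k \<inter> E))"
      proof (rule measure_finite_Union)
        show "disjoint_family_on (\<lambda>k. A k \<inter> E) {..<n}"
          unfolding disjoint_family_on_def using Adisj by blast
      qed (auto simp: E)
      finally show ?thesis .
    qed
    have "\<forall>k. \<exists>U. U \<in> borel_measurable M \<and> (\<forall>\<omega>. 0 < U \<omega> \<and> U \<omega> < 1) \<and>
             (\<forall>t\<in>{0..1}. P.prob (A k \<inter> {\<omega>\<in>space M. U \<omega> \<le> t}) = t * P.prob (A k))"
      using P.uniform_exists[OF al Aev] by blast
    then obtain Uf where Uf: "\<forall>k. Uf k \<in> borel_measurable M \<and> (\<forall>\<omega>. 0 < Uf k \<omega> \<and> Uf k \<omega> < 1) \<and>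
             (\<forall>t\<in>{0..1}. P.prob (A k \<inter> {\<omega>\<in>space M. Uf k \<omega> \<le> t}) = t * P.prob (A k))"
      by (rule choice[THEN exE]) blast
    define V where "V k \<omega> = qf \<nu> (Uf k \<omega>)" for k \<omega>
    have Vm[measurable]: "V k \<in> borel_measurable M" for k
      unfolding V_def using Uf by (intro P.quantile_on(1)[OF RN, of "Uf k" "A k"]) (auto simp: Aev)
    have VB: "P.prob (A k \<inter> {\<omega>\<in>space M. V k \<omega> \<in> B}) = P.prob (A k) * measure \<nu> B"
      if "B \<in> sets borel" for k B
      unfolding V_def using Uf that by (intro P.quantile_on(2)[OF RN, of "Uf k" "A k"]) (auto simp: Aev)
    define Y where "Y i \<omega> = (\<Sum>k<n. if \<omega> \<in> A k then dec n ((i+k) mod n) (V k \<omega>) else 0)" for i \<omega>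
    have Ym[measurable]: "Y i \<in> borel_measurable M" for i unfolding Y_def by measurable
    have Yon: "Y i \<omega> = dec n ((i+k) mod n) (V k \<omega>)" if "\<omega> \<in> A k" "k < n" for i \<omega> k
    proof -
      have "Y i \<omega> = (\<Sum>k'<n. if k' = k then dec n ((i+k') mod n) (V k' \<omega>) else 0)"
        unfolding Y_def using that Adisj by (intro sum.cong refl) auto
      also have "\<dots> = dec n ((i+k) mod n) (V k \<omega>)" using that by (simp add: sum.delta)
      finally show ?thesis .
    qed
    have cdfX: "P.prob {\<omega>\<in>space M. X j \<omega> \<le> x} = mat_mix n L F j x" if "j < n" for j x
      using Xc[OF that] cdf_distr_eq[OF Xm[OF that], of x] by simp
    have cdfY: "cdf (distr M borel (Y i)) x = (1 / real n) * (\<Sum>j<n. F j x)" if "i < n" for i x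
    proof -
      have "cdf (distr M borel (Y i)) x = P.prob {\<omega>\<in>space M. Y i \<omega> \<le> x}" by (rule cdf_distr_eq[OF Ym])
      also have "\<dots> = (\<Sum>k<n. P.prob (A k \<inter> {\<omega>\<in>space M. Y i \<omega> \<le> x}))" by (rule sumA) measurable
      also have "\<dots> = (\<Sum>k<n. (1 / real n) * P.prob {\<omega>\<in>space M. X ((i+k) mod n) \<omega> \<le> x})"
      proof (rule sum.cong[OF refl])
        fix k assume k: "k \<in> {..<n}"
        define j where "j = (i+k) mod n"
        have j: "j < n" unfolding j_def using n0 by simp
        have bs: "{w. dec n j w \<le> x} \<in> sets borel" by measurable
        have "A k \<inter> {\<omega>\<in>space M. Y i \<omega> \<le> x} = A k \<inter> {\<omega>\<in>space M. V k \<omega> \<in> {w. dec n j w \<le> x}}"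
          using Yon k unfolding j_def by auto
        then have "P.prob (A k \<inter> {\<omega>\<in>space M. Y i \<omega> \<le> x}) = P.prob (A k) * measure \<nu> {w. dec n j w \<le> x}"
          using VB[OF bs] by simp
        also have "measure \<nu> {w. dec n j w \<le> x} = P.prob {\<omega>\<in>space M. X j \<omega> \<le> x}"
          using nuB[OF bs] decW[OF j] by simp
        finally show "P.prob (A k \<inter> {\<omega>\<in>space M. Y i \<omega> \<le> x}) = (1 / real n) * P.prob {\<omega>\<in>space M. X ((i+k) mod n) \<omega> \<le> x}"
          using Ap k unfolding j_def by simp
      qed
      also have "\<dots> = (1 / real n) * (\<Sum>k<n. P.prob {\<omega>\<in>space M. X ((i+k) mod n) \<omega> \<le> x})"
        by (simp add: sum_distrib_left)
      also have "(\<Sum>k<n. P.prob {\<omega>\<in>space M. X ((i+k) mod n) \<omega> \<le> x}) = (\<Sum>j<n. P.prob {\<omega>\<in>space M. X j \<omega> \<le> x})"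
        by (rule sum_rot[OF n0, of "\<lambda>j. P.prob {\<omega>\<in>space M. X j \<omega> \<le> x}"])
      also have "\<dots> = (\<Sum>j<n. mat_mix n L F j x)" by (rule sum.cong[OF refl]) (simp add: cdfX)
      also have "\<dots> = (\<Sum>j<n. \<Sum>l<n. L j l * F l x)" unfolding mat_mix_def by simp
      also have "\<dots> = (\<Sum>l<n. \<Sum>j<n. L j l * F l x)" by (rule sum.swap)
      also have "\<dots> = (\<Sum>l<n. F l x)"
      proof (rule sum.cong[OF refl])
        fix l assume "l \<in> {..<n}"
        then have "(\<Sum>j<n. L j l) = 1" using \<open>doubly_stochastic n L\<close> unfolding doubly_stochastic_def by auto
        then show "(\<Sum>j<n. L j l * F l x) = F l x" by (simp add: sum_distrib_right[symmetric])
      qed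
      finally show ?thesis .
    qed
    define Hd where "Hd w = (\<Sum>j<n. dec n j w)" for w
    have Hdm[measurable]: "Hd \<in> borel_measurable borel" unfolding Hd_def by measurable
    have HdW: "Hd (W \<omega>) = (\<Sum>j<n. X j \<omega>)" for \<omega> unfolding Hd_def using decW by simp
    have SYon: "(\<Sum>i<n. Y i \<omega>) = Hd (V k \<omega>)" if "\<omega> \<in> A k" "k < n" for \<omega> k
    proof -
      have "(\<Sum>i<n. Y i \<omega>) = (\<Sum>i<n. dec n ((k+i) mod n) (V k \<omega>))"
        using Yon[OF that] by (simp add: add.commute)
      also have "\<dots> = Hd (V k \<omega>)" unfolding Hd_def
        by (rule sum_rot[OF n0, of "\<lambda>j. dec n j (V k \<omega>)"])
      finally show ?thesis .
    qed
    have cdfS: "cdf (distr M borel (\<lambda>\<omega>. \<Sum>i<n. Y i \<omega>)) x = H x" for x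
    proof -
      have bs: "{w. Hd w \<le> x} \<in> sets borel" by measurable
      have "cdf (distr M borel (\<lambda>\<omega>. \<Sum>i<n. Y i \<omega>)) x = P.prob {\<omega>\<in>space M. (\<Sum>i<n. Y i \<omega>) \<le> x}"
        by (rule cdf_distr_eq) measurable
      also have "\<dots> = (\<Sum>k<n. P.prob (A k \<inter> {\<omega>\<in>space M. (\<Sum>i<n. Y i \<omega>) \<le> x}))" by (rule sumA) measurable
      also have "\<dots> = (\<Sum>k<n. (1 / real n) * measure \<nu> {w. Hd w \<le> x})"
      proof (rule sum.cong[OF refl])
        fix k assume k: "k \<in> {..<n}"
        have "A k \<inter> {\<omega>\<in>space M. (\<Sum>i<n. Y i \<omega>) \<le> x} = A k \<inter> {\<omega>\<in>space M. V k \<omega> \<in> {w. Hd w \<le> x}}"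
          using SYon k by auto
        then show "P.prob (A k \<inter> {\<omega>\<in>space M. (\<Sum>i<n. Y i \<omega>) \<le> x}) = (1 / real n) * measure \<nu> {w. Hd w \<le> x}"
          using VB[OF bs] Ap k by simp
      qed
      also have "\<dots> = measure \<nu> {w. Hd w \<le> x}" using n0 by simp
      also have "\<dots> = P.prob {\<omega>\<in>space M. (\<Sum>j<n. X j \<omega>) \<le> x}" using nuB[OF bs] HdW by simp
      also have "\<dots> = H x" unfolding H
        by (rule cdf_distr_eq[symmetric]) (use Xm in measurable)
      finally show ?thesis .
    qed
    show ?thesis unfolding Dn_def
    proof (intro CollectI exI[of _ Y] conjI allI impI)
      fix i assume "i < n"
      show "Y i \<in> borel_measurable M" by (rule Ym)
      show "cdf (distr M borel (Y i)) = (\<lambda>x. (1 / real n) * (\<Sum>i<n. F i x))"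
        using cdfY[OF \<open>i < n\<close>] by auto
    next
      show "H = cdf (distr M borel (\<lambda>\<omega>. \<Sum>i<n. Y i \<omega>))" using cdfS by auto
    qed
  qed
qed


end
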